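(* Let $A(n) = \sum_{k=0}^{n} \binom{n}{k}^2 \binom{n+k}{k}^2$ for integers $n \geq 0$ (the Apéry numbers). Then for every $n \geq 0$, $A(n)$ equals the coefficient of $x_1^n x_2^n x_3^n x_4^n$ in the Taylor expansion at the origin of the rational function $$\frac{1}{(1 - x_1 - x_2)(1 - x_3 - x_4) - x_1 x_2 x_3 x_4}.$$ *)

theory Defs
  imports Main
begin

text \<open>Formal power series in four variables x1,x2,x3,x4 with integer coefficients,
  represented by their coefficient function on exponent vectors (a,b,c,d).\<close>

type_synonym mps4 = "nat \<times> nat \<times> nat \<times> nat \<Rightarrow> int"

definition mps4_one :: mps4 where
  "mps4_one = (\<lambda>e. if e = (0,0,0,0) then 1 else 0)"

definition mps4_add :: "mps4 \<Rightarrow> mps4 \<Rightarrow> mps4" where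
  "mps4_add f g = (\<lambda>e. f e + g e)"

definition mps4_sub :: "mps4 \<Rightarrow> mps4 \<Rightarrow> mps4" where
  "mps4_sub f g = (\<lambda>e. f e - g e)"

definition mps4_mult :: "mps4 \<Rightarrow> mps4 \<Rightarrow> mps4" where
  "mps4_mult f g = (\<lambda>(a,b,c,d).
     \<Sum>i\<le>a. \<Sum>j\<le>b. \<Sum>k\<le>c. \<Sum>l\<le>d. f (i,j,k,l) * g (a-i, b-j, c-k, d-l))"

definition mps4_X1 :: mps4 where "mps4_X1 = (\<lambda>e. if e = (1,0,0,0) then 1 else 0)"
definition mps4_X2 :: mps4 where "mps4_X2 = (\<lambda>e. if e = (0,1,0,0) then 1 else 0)"
definition mps4_X3 :: mps4 where "mps4_X3 = (\<lambda>e. if e = (0,0,1,0) then 1 else 0)"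
definition mps4_X4 :: mps4 where "mps4_X4 = (\<lambda>e. if e = (0,0,0,1) then 1 else 0)"

definition apery_denom :: mps4 where
  "apery_denom =
     mps4_sub
       (mps4_mult (mps4_sub (mps4_sub mps4_one mps4_X1) mps4_X2)
                  (mps4_sub (mps4_sub mps4_one mps4_X3) mps4_X4))
       (mps4_mult (mps4_mult mps4_X1 mps4_X2) (mps4_mult mps4_X3 mps4_X4))"

definition apery :: "nat \<Rightarrow> nat" where
  "apery n = (\<Sum>k\<le>n. (n choose k)^2 * ((n + k) choose k)^2)"

end

theory Submission
  imports Defs
begin

definition Mz :: "int \<Rightarrow> int \<Rightarrow> int \<Rightarrow> int" where
"Mz p q m = (if p < 0 \<or> q < 0 \<or> m < 0 then 0
   else int ((nat (p+q+m) choose nat p) * (nat (q+m) choose nat m)))"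

lemma Mz_nat: "Mz (int P) (int Q) (int M) = int ((P+Q+M choose P) * (Q+M choose M))"
  unfolding Mz_def by (simp add: of_nat_add[symmetric] del: of_nat_add)

lemma Mz_neg: "p < 0 \<or> q < 0 \<or> m < 0 \<Longrightarrow> Mz p q m = 0"
  unfolding Mz_def by simp

lemma Mz_000: "Mz 0 0 0 = 1" unfolding Mz_def by simp

lemma int_Suc_m1: "int (Suc n) - 1 = int n" by simp

lemma pas_nat: "\<not>(P=0\<and>Q=0\<and>M=0) \<Longrightarrow>
   Mz (int P) (int Q) (int M) = Mz (int P - 1) (int Q) (int M) + Mz (int P) (int Q - 1) (int M) + Mz (int P) (int Q) (int M - 1)"
proof (cases P; cases Q; cases M)
  fix p q m assume "P = Suc p" "Q = Suc q" "M = Suc m"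
  have h1: "(Suc (p+q+m+2) choose Suc p) = (p+q+m+2 choose p) + (p+q+m+2 choose Suc p)"
    by (rule binomial_Suc_Suc)
  have h2: "(Suc (q+m+1) choose Suc m) = (q+m+1 choose m) + (q+m+1 choose Suc m)"
    by (rule binomial_Suc_Suc)
  have e1: "Suc p + Suc q + Suc m = Suc (p+q+m+2)" "Suc q + Suc m = Suc (q+m+1)"
     "p + Suc q + Suc m = p+q+m+2" "Suc p + q + Suc m = p+q+m+2" "Suc p + Suc q + m = p+q+m+2"
     "q + Suc m = q+m+1" "Suc q + m = q+m+1" by simp_all
  show ?thesis unfolding \<open>P = _\<close> \<open>Q = _\<close> \<open>M = _\<close> int_Suc_m1 Mz_nat e1 h1 h2
    by (simp only: of_nat_add[symmetric] of_nat_eq_iff algebra_simps)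
qed (simp_all add: int_Suc_m1 Mz_def nat_add_distrib del: of_nat_Suc)
lemma Mz_pascal: assumes "p \<ge> 0" "q \<ge> 0" "m \<ge> 0" "\<not>(p=0\<and>q=0\<and>m=0)"
  shows "Mz p q m = Mz (p-1) q m + Mz p (q-1) m + Mz p q (m-1)"
proof -
  obtain P Q M where "p = int P" "q = int Q" "m = int M" using assms
    by (metis nonneg_int_cases)
  then show ?thesis using pas_nat[of P Q M] assms by simp
qed

definition Qz :: "nat \<Rightarrow> int \<Rightarrow> int \<Rightarrow> int" where
"Qz m a b = Mz (a - int m) (b - int m) (int m)"

lemma Qz_S: "Qz (Suc m) a b - Qz (Suc m) (a-1) b - Qz (Suc m) a (b-1) = Qz m (a-1) (b-1)"
proof (cases "a - int (Suc m) < 0 \<or> b - int (Suc m) < 0")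
  case True then show ?thesis unfolding Qz_def by (auto simp: Mz_neg)
next
  case False
  then show ?thesis unfolding Qz_def
    using Mz_pascal[of "a - int (Suc m)" "b - int (Suc m)" "int (Suc m)"]
    by (simp add: algebra_simps)
qed

lemma Qz_0: "Qz 0 a b - Qz 0 (a-1) b - Qz 0 a (b-1) = (if a = 0 \<and> b = 0 then 1 else 0)"
proof (cases "a < 0 \<or> b < 0")
  case True then show ?thesis unfolding Qz_def by (auto simp: Mz_neg)
next
  case False
  then show ?thesis unfolding Qz_def
    using Mz_pascal[of a b 0] by (auto simp: Mz_neg Mz_000)
qed

lemma Qz_vanish: "a < int m \<or> b < int m \<Longrightarrow> Qz m a b = 0"
  unfolding Qz_def by (auto simp: Mz_neg)

definition Gz :: "int \<Rightarrow> int \<Rightarrow> int \<Rightarrow> int \<Rightarrow> int" where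
"Gz a b c d = (\<Sum>m\<le>nat a. Qz m a b * Qz m c d)"

lemma Gz_ext: "nat a \<le> K \<Longrightarrow> Gz a b c d = (\<Sum>m\<le>K. Qz m a b * Qz m c d)"
  unfolding Gz_def
  by (rule sum.mono_neutral_left) (auto intro!: Qz_vanish)

lemma Gz_neg: "a < 0 \<or> b < 0 \<or> c < 0 \<or> d < 0 \<Longrightarrow> Gz a b c d = 0"
  unfolding Gz_def by (auto intro!: sum.neutral simp: Qz_vanish)

lemma Gz_rec:
  "Gz a b c d - Gz (a-1) b c d - Gz a (b-1) c d - Gz a b (c-1) d - Gz a b c (d-1)
   + Gz (a-1) b (c-1) d + Gz (a-1) b c (d-1) + Gz a (b-1) (c-1) d + Gz a (b-1) c (d-1)
   - Gz (a-1) (b-1) (c-1) (d-1) = (if a = 0 \<and> b = 0 \<and> c = 0 \<and> d = 0 then 1 else 0)"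
proof -
  define K where "K = Suc (nat a)"
  define A where "A m = Qz m a b - Qz m (a-1) b - Qz m a (b-1)" for m
  define B where "B m = Qz m c d - Qz m (c-1) d - Qz m c (d-1)" for m
  have k1: "nat a \<le> K" "nat (a-1) \<le> K" unfolding K_def by auto
  have "(\<Sum>m\<le>K. A m * B m) = A 0 * B 0 + (\<Sum>m\<le>nat a. A (Suc m) * B (Suc m))"
    unfolding K_def by (rule sum.atMost_Suc_shift)
  also have "\<dots> = (if a = 0 \<and> b = 0 \<and> c = 0 \<and> d = 0 then 1 else 0) + Gz (a-1) (b-1) (c-1) (d-1)"
    using Gz_ext[of "a-1" "nat a"] unfolding A_def B_def by (simp add: Qz_0 Qz_S)
  finally have 1: "(\<Sum>m\<le>K. A m * B m) = (if a = 0 \<and> b = 0 \<and> c = 0 \<and> d = 0 then 1 else 0) + Gz (a-1) (b-1) (c-1) (d-1)" .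
  have "(\<Sum>m\<le>K. A m * B m) = (\<Sum>m\<le>K. Qz m a b * Qz m c d) - (\<Sum>m\<le>K. Qz m (a-1) b * Qz m c d)
      - (\<Sum>m\<le>K. Qz m a (b-1) * Qz m c d) - (\<Sum>m\<le>K. Qz m a b * Qz m (c-1) d)
      - (\<Sum>m\<le>K. Qz m a b * Qz m c (d-1)) + (\<Sum>m\<le>K. Qz m (a-1) b * Qz m (c-1) d)
      + (\<Sum>m\<le>K. Qz m (a-1) b * Qz m c (d-1)) + (\<Sum>m\<le>K. Qz m a (b-1) * Qz m (c-1) d)
      + (\<Sum>m\<le>K. Qz m a (b-1) * Qz m c (d-1))"
    unfolding A_def B_def by (simp add: sum.distrib sum_subtractf algebra_simps)
  also have "\<dots> = Gz a b c d - Gz (a-1) b c d - Gz a (b-1) c d - Gz a b (c-1) d - Gz a b c (d-1)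
   + Gz (a-1) b (c-1) d + Gz (a-1) b c (d-1) + Gz a (b-1) (c-1) d + Gz a (b-1) c (d-1)"
    using k1 by (simp add: Gz_ext)
  finally show ?thesis using 1 by simp
qed
definition mono4 :: "nat \<times> nat \<times> nat \<times> nat \<Rightarrow> mps4" where
"mono4 p = (\<lambda>e. if e = p then 1 else 0)"

definition Sh :: "mps4 \<Rightarrow> nat \<times> nat \<times> nat \<times> nat \<Rightarrow> mps4" where
"Sh H p e = (case p of (i,j,k,l) \<Rightarrow> case e of (a,b,c,d) \<Rightarrow>
    (if i \<le> a \<and> j \<le> b \<and> k \<le> c \<and> l \<le> d then H (a-i,b-j,c-k,d-l) else 0))"

lemma sum_if_out: "(\<Sum>x\<in>A. if P then f x else 0) = (if P then (\<Sum>x\<in>A. f x) else (0::int))"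
  by simp

lemma mult_mono: "mps4_mult (mono4 (i,j,k,l)) H = Sh H (i,j,k,l)"
proof (rule ext, clarify)
  fix a b c d
  have eq: "\<And>x y z w h. (if (x,y,z,w) = (i,j,k,l) then 1 else 0) * h =
     (if w = l then (if z = k then (if y = j then (if x = i then h else 0) else 0) else 0) else (0::int))"
    by auto
  show "mps4_mult (mono4 (i,j,k,l)) H (a,b,c,d) = Sh H (i,j,k,l) (a,b,c,d)"
    unfolding mps4_mult_def mono4_def Sh_def by (simp only: eq) (simp add: sum.delta sum_if_out)
qed

lemma Sh_mono: "Sh (mono4 (i',j',k',l')) (i,j,k,l) = mono4 (i+i',j+j',k+k',l+l')"
  unfolding Sh_def mono4_def by (rule ext) (auto split: if_splits)

lemma mult_sub_left: "mps4_mult (mps4_sub f g) h = mps4_sub (mps4_mult f h) (mps4_mult g h)"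
  unfolding mps4_mult_def mps4_sub_def
  by (rule ext) (auto simp: sum_subtractf left_diff_distrib)

lemma mult_sub_right: "mps4_mult h (mps4_sub f g) = mps4_sub (mps4_mult h f) (mps4_mult h g)"
  unfolding mps4_mult_def mps4_sub_def
  by (rule ext) (auto simp: sum_subtractf right_diff_distrib)

lemma monos4: "mps4_one = mono4 (0,0,0,0)" "mps4_X1 = mono4 (1,0,0,0)" "mps4_X2 = mono4 (0,1,0,0)"
  "mps4_X3 = mono4 (0,0,1,0)" "mps4_X4 = mono4 (0,0,0,1)"
  unfolding mps4_one_def mps4_X1_def mps4_X2_def mps4_X3_def mps4_X4_def mono4_def by auto

lemma Sh0: "Sh H (0,0,0,0) = H" unfolding Sh_def by (rule ext) auto

lemma denom_mult: "mps4_mult apery_denom H e = H e - Sh H (1,0,0,0) e - Sh H (0,1,0,0) e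
   - Sh H (0,0,1,0) e - Sh H (0,0,0,1) e + Sh H (1,0,1,0) e + Sh H (1,0,0,1) e
   + Sh H (0,1,1,0) e + Sh H (0,1,0,1) e - Sh H (1,1,1,1) e"
  unfolding apery_denom_def monos4 mult_sub_left mult_sub_right mult_mono Sh_mono
  by (simp add: Sh0 mps4_sub_def)
definition Fap :: mps4 where "Fap = (\<lambda>(a,b,c,d). Gz (int a) (int b) (int c) (int d))"

lemma Sh_Fap: "Sh Fap (i,j,k,l) (a,b,c,d) = Gz (int a - int i) (int b - int j) (int c - int k) (int d - int l)"
  unfolding Sh_def Fap_def by (auto simp: of_nat_diff Gz_neg)

lemma Fap_inv: "mps4_mult apery_denom Fap = mps4_one"
proof (rule ext, clarify)
  fix a b c d
  show "mps4_mult apery_denom Fap (a,b,c,d) = mps4_one (a,b,c,d)"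
    unfolding denom_mult Sh_Fap
    using Gz_rec[of "int a" "int b" "int c" "int d"]
    by (simp add: Fap_def mps4_one_def)
qed

lemma uniq: assumes "mps4_mult apery_denom G = mps4_one" "mps4_mult apery_denom F = mps4_one"
  shows "G = F"
proof -
  have "\<forall>a b c d. a+b+c+d = n \<longrightarrow> G(a,b,c,d) = F(a,b,c,d)" for n
  proof (induction n rule: less_induct)
    case (less n)
    show ?case
    proof (intro allI impI)
      fix a b c d assume n: "a+b+c+d = n"
      have IH: "\<And>a' b' c' d'. a'+b'+c'+d' < a+b+c+d \<Longrightarrow> G(a',b',c',d') = F(a',b',c',d')"
        using less n by blast
      have sh: "\<And>i j k l. i+j+k+l > 0 \<Longrightarrow> Sh G (i,j,k,l) (a,b,c,d) = Sh F (i,j,k,l) (a,b,c,d)"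
        unfolding Sh_def by (auto intro!: IH)
      from assms have "mps4_mult apery_denom G (a,b,c,d) = mps4_mult apery_denom F (a,b,c,d)" by simp
      then show "G(a,b,c,d) = F(a,b,c,d)" unfolding denom_mult
        using sh[of 1 0 0 0] sh[of 0 1 0 0] sh[of 0 0 1 0] sh[of 0 0 0 1]
          sh[of 1 0 1 0] sh[of 1 0 0 1] sh[of 0 1 1 0] sh[of 0 1 0 1] sh[of 1 1 1 1]
        by simp
    qed
  qed
  then show ?thesis by (intro ext) (metis prod_cases4)
qed

lemma Qz_diag: "m \<le> n \<Longrightarrow> Qz m (int n) (int n) = int ((n - m + (n - m) + m choose (n-m)) * (n choose m))"
  unfolding Qz_def by (simp add: of_nat_diff[symmetric] Mz_nat del: of_nat_diff)

lemma Fap_diag: "Fap (n,n,n,n) = int (apery n)"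
proof -
  have "Fap (n,n,n,n) = (\<Sum>m\<le>n. Qz m (int n) (int n) * Qz m (int n) (int n))"
    by (simp add: Fap_def Gz_def)
  also have "\<dots> = (\<Sum>m\<in>{0..n}. int (((n - m + (n - m) + m choose (n-m)) * (n choose m))^2))"
    by (rule sum.cong) (auto simp: Qz_diag power2_eq_square atLeast0AtMost)
  also have "\<dots> = (\<Sum>k\<in>{0..n}. int (((n - (n - k) + (n - (n - k)) + (n - k) choose (n-(n-k))) * (n choose (n-k)))^2))"
    by (subst sum.atLeastAtMost_rev) simp
  also have "\<dots> = (\<Sum>k\<le>n. int ((n choose k)^2 * ((n + k) choose k)^2))"
    by (rule sum.cong) (auto simp: atLeast0AtMost binomial_symmetric[symmetric] power_mult_distrib
        add.commute)
  also have "\<dots> = int (apery n)" by (simp add: apery_def)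
  finally show ?thesis .
qed

theorem theorem1p1:
  shows "\<exists>F. mps4_mult apery_denom F = mps4_one
            \<and> (\<forall>G. mps4_mult apery_denom G = mps4_one \<longrightarrow> G = F)
            \<and> (\<forall>n. F (n, n, n, n) = int (apery n))"
  using Fap_inv uniq Fap_diag by blast

end
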